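(* Let $q$ be a prime power and let $\ell\ge 2$. There is a constant $c_\ell>0$ depending only on $\ell$ such that the following holds. Let $n\le m$ and let $C\subseteq\mathbb{F}_{q^m}^n$ be an MRD code of rate $R$ that is $\big(\frac{\ell(1-R)}{\ell+1},\ell\big)$-average-radius list decodable in the rank metric. Then $m\ge c_\ell\,(nR-1)(n-\ell-nR+1)$. In particular, if $R\in[c,\,1-c-\ell/n]$ for some constant $c>0$, then $m=\Omega_{\ell,c}(n^2)$.
   Context: For $\bm{v}=(v_1,\dots,v_n)\in\mathbb{F}_{q^m}^n$, $\mathrm{rank}_{\mathbb{F}_q}(\bm{v})=\dim_{\mathbb{F}_q}\mathrm{span}_{\mathbb{F}_q}\{v_1,\dots,v_n\}$ (equivalently the rank of $\bm{v}$ viewed as an $m\times n$ matrix over $\mathbb{F}_q$) and $d_R(\bm{u},\bm{v})=\mathrm{rank}_{\mathbb{F}_q}(\bm{u}-\bm{v})$. A code is a subset $C\subseteq\mathbb{F}_{q^m}^n$; its rate is $R=\log_q|C|/(nm)$ and its minimum distance $d$ is the minimum of $d_R$ over distinct codewords. $C$ is MRD if it attains the Singleton bound, i.e. $|C|=q^{m(n-d+1)}$. $C$ is $(\rho,\ell)$-average-radius list decodable if for every $\bm{y}\in\mathbb{F}_{q^m}^n$ and every $\ell+1$ distinct codewords $\bm{c}_0,\dots,\bm{c}_\ell$, $\frac{1}{\ell+1}\sum_{i=0}^\ell d_R(\bm{y},\bm{c}_i)>\rho n$. *)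

theory Defs
  imports "HOL-Algebra.Ring" "HOL-Algebra.FiniteProduct" Complex_Main
begin

text \<open>Vectors of F_{q^m}^n are represented by their coordinate matrices: m x n matrices over
  the base field F = F_q (an HOL-Algebra field), stored as functions nat => nat => 'a that are
  zero outside the index range 0..m-1 x 0..n-1.\<close>

definition fmats :: "('a, 'b) ring_scheme \<Rightarrow> nat \<Rightarrow> nat \<Rightarrow> (nat \<Rightarrow> nat \<Rightarrow> 'a) set" where
  "fmats F m n = {A. (\<forall>i<m. \<forall>j<n. A i j \<in> carrier F) \<and>
                     (\<forall>i j. (m \<le> i \<or> n \<le> j) \<longrightarrow> A i j = \<zero>\<^bsub>F\<^esub>)}"

definition cols_indep :: "('a, 'b) ring_scheme \<Rightarrow> nat \<Rightarrow> (nat \<Rightarrow> nat \<Rightarrow> 'a) \<Rightarrow> nat set \<Rightarrow> bool" where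
  "cols_indep F m A S \<longleftrightarrow>
     (\<forall>c \<in> S \<rightarrow> carrier F.
        (\<forall>i<m. finsum F (\<lambda>j. c j \<otimes>\<^bsub>F\<^esub> A i j) S = \<zero>\<^bsub>F\<^esub>) \<longrightarrow> (\<forall>j\<in>S. c j = \<zero>\<^bsub>F\<^esub>))"

definition mrank :: "('a, 'b) ring_scheme \<Rightarrow> nat \<Rightarrow> nat \<Rightarrow> (nat \<Rightarrow> nat \<Rightarrow> 'a) \<Rightarrow> nat" where
  "mrank F m n A = Max {card S | S. S \<subseteq> {..<n} \<and> cols_indep F m A S}"

definition rdist :: "('a, 'b) ring_scheme \<Rightarrow> nat \<Rightarrow> nat \<Rightarrow>
    (nat \<Rightarrow> nat \<Rightarrow> 'a) \<Rightarrow> (nat \<Rightarrow> nat \<Rightarrow> 'a) \<Rightarrow> nat" where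
  "rdist F m n A B = mrank F m n (\<lambda>i j. A i j \<ominus>\<^bsub>F\<^esub> B i j)"

definition min_dist :: "('a, 'b) ring_scheme \<Rightarrow> nat \<Rightarrow> nat \<Rightarrow> (nat \<Rightarrow> nat \<Rightarrow> 'a) set \<Rightarrow> nat" where
  "min_dist F m n C = Min {rdist F m n A B | A B. A \<in> C \<and> B \<in> C \<and> A \<noteq> B}"

definition code_rate :: "('a, 'b) ring_scheme \<Rightarrow> nat \<Rightarrow> nat \<Rightarrow> (nat \<Rightarrow> nat \<Rightarrow> 'a) set \<Rightarrow> real" where
  "code_rate F m n C = log (real (card (carrier F))) (real (card C)) / (real n * real m)"

text \<open>MRD code (a code with at least two codewords, so that d is defined) attaining the
  Singleton bound |C| = q^(m(n-d+1)).\<close>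
definition is_MRD :: "('a, 'b) ring_scheme \<Rightarrow> nat \<Rightarrow> nat \<Rightarrow> (nat \<Rightarrow> nat \<Rightarrow> 'a) set \<Rightarrow> bool" where
  "is_MRD F m n C \<longleftrightarrow> C \<subseteq> fmats F m n \<and> 2 \<le> card C \<and>
     card C = card (carrier F) ^ (m * (n - min_dist F m n C + 1))"

definition avg_list_dec :: "('a, 'b) ring_scheme \<Rightarrow> nat \<Rightarrow> nat \<Rightarrow> (nat \<Rightarrow> nat \<Rightarrow> 'a) set
    \<Rightarrow> real \<Rightarrow> nat \<Rightarrow> bool" where
  "avg_list_dec F m n C \<rho> l \<longleftrightarrow>
     (\<forall>y \<in> fmats F m n. \<forall>cs. inj_on cs {..l} \<and> cs ` {..l} \<subseteq> C \<longrightarrow>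
        (\<Sum>i\<le>l. real (rdist F m n y (cs i))) / real (l + 1) > \<rho> * real n)"

end

theory Submission
  imports Defs "HOL-Library.FuncSet"
begin
definition vecs :: "('a, 'b) ring_scheme \<Rightarrow> nat \<Rightarrow> (nat \<Rightarrow> 'a) set" where
  "vecs F n = {x. (\<forall>j<n. x j \<in> carrier F) \<and> (\<forall>j. n \<le> j \<longrightarrow> x j = \<zero>\<^bsub>F\<^esub>)}"

definition mv :: "('a, 'b) ring_scheme \<Rightarrow> nat \<Rightarrow> (nat \<Rightarrow> nat \<Rightarrow> 'a) \<Rightarrow> (nat \<Rightarrow> 'a) \<Rightarrow> nat \<Rightarrow> 'a" where
  "mv F n D x = (\<lambda>i. finsum F (\<lambda>j. D i j \<otimes>\<^bsub>F\<^esub> x j) {..<n})"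

definition lincomb :: "('a, 'b) ring_scheme \<Rightarrow> nat \<Rightarrow> (nat \<Rightarrow> 'a) \<Rightarrow> (nat \<Rightarrow> nat \<Rightarrow> 'a) \<Rightarrow> nat \<Rightarrow> 'a" where
  "lincomb F r lam V = (\<lambda>s. finsum F (\<lambda>j. lam j \<otimes>\<^bsub>F\<^esub> V j s) {..<r})"

definition pivots :: "('a, 'b) ring_scheme \<Rightarrow> nat \<Rightarrow> nat \<Rightarrow> (nat \<Rightarrow> nat \<Rightarrow> 'a) \<Rightarrow> (nat \<Rightarrow> nat) \<Rightarrow> bool" where
  "pivots F n r V piv \<longleftrightarrow> (\<forall>j<r. V j \<in> vecs F n \<and> piv j < n \<and>
      (\<forall>j'<r. V j' (piv j) = (if j' = j then \<one>\<^bsub>F\<^esub> else \<zero>\<^bsub>F\<^esub>)))"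

context field
begin

lemma fmats_carrier: "D \<in> fmats R m n \<Longrightarrow> D i j \<in> carrier R"
  unfolding fmats_def by (cases "i < m \<and> j < n") auto

lemma vecs_carrier: "x \<in> vecs R n \<Longrightarrow> x j \<in> carrier R"
  unfolding vecs_def by (cases "j < n") auto

lemma mv_closed: "D \<in> fmats R m n \<Longrightarrow> x \<in> vecs R n \<Longrightarrow> mv R n D x i \<in> carrier R"
  unfolding mv_def by (auto intro!: finsum_closed simp: fmats_carrier vecs_carrier)

lemma mv_lin:
  assumes D: "D \<in> fmats R m n" and x: "x \<in> vecs R n" and y: "y \<in> vecs R n"
    and a: "a \<in> carrier R" and b: "b \<in> carrier R"
  shows "mv R n D (\<lambda>s. a \<otimes> x s \<oplus> b \<otimes> y s) i = a \<otimes> mv R n D x i \<oplus> b \<otimes> mv R n D y i"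
proof -
  have c1: "\<And>j. D i j \<in> carrier R" "\<And>j. x j \<in> carrier R" "\<And>j. y j \<in> carrier R"
    using D x y by (auto simp: fmats_carrier vecs_carrier)
  have "mv R n D (\<lambda>s. a \<otimes> x s \<oplus> b \<otimes> y s) i =
      (\<Oplus>j\<in>{..<n}. a \<otimes> (D i j \<otimes> x j) \<oplus> b \<otimes> (D i j \<otimes> y j))"
    unfolding mv_def
    by (rule finsum_cong') (use c1 a b in \<open>auto, algebra\<close>)
  also have "\<dots> = (\<Oplus>j\<in>{..<n}. a \<otimes> (D i j \<otimes> x j)) \<oplus> (\<Oplus>j\<in>{..<n}. b \<otimes> (D i j \<otimes> y j))"
    by (rule finsum_addf) (use c1 a b in auto)
  also have "\<dots> = a \<otimes> mv R n D x i \<oplus> b \<otimes> mv R n D y i"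
    unfolding mv_def
    using c1 a b by (simp add: finsum_rdistr Pi_def)
  finally show ?thesis .
qed

lemma mv_diffm:
  assumes A: "A \<in> fmats R m n" and B: "B \<in> fmats R m n" and x: "x \<in> vecs R n"
  shows "mv R n (\<lambda>i j. A i j \<ominus> B i j) x i = mv R n A x i \<ominus> mv R n B x i"
proof -
  have c1: "\<And>j. A i j \<in> carrier R" "\<And>j. x j \<in> carrier R" "\<And>j. B i j \<in> carrier R"
    using A B x by (auto simp: fmats_carrier vecs_carrier)
  have "mv R n (\<lambda>i j. A i j \<ominus> B i j) x i =
      (\<Oplus>j\<in>{..<n}. (A i j \<otimes> x j) \<oplus> (\<ominus>\<one>) \<otimes> (B i j \<otimes> x j))"
    unfolding mv_def
    by (rule finsum_cong') (use c1 in \<open>auto, algebra\<close>)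
  also have "\<dots> = (\<Oplus>j\<in>{..<n}. A i j \<otimes> x j) \<oplus> (\<Oplus>j\<in>{..<n}. (\<ominus>\<one>) \<otimes> (B i j \<otimes> x j))"
    by (rule finsum_addf) (use c1 in auto)
  also have "\<dots> = mv R n A x i \<oplus> (\<ominus>\<one>) \<otimes> mv R n B x i"
    unfolding mv_def
    using c1 by (simp add: finsum_rdistr Pi_def)
  also have "\<dots> = mv R n A x i \<ominus> mv R n B x i"
  proof -
    have "mv R n A x i \<in> carrier R" "mv R n B x i \<in> carrier R"
      using A B x by (auto intro: mv_closed)
    then show ?thesis by algebra
  qed
  finally show ?thesis .
qed

lemma mv_unit:
  assumes D: "D \<in> fmats R m n" and s: "s < n"
  shows "mv R n D (\<lambda>j. if j = s then \<one> else \<zero>) i = D i s"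
proof -
  have c1: "\<And>j. D i j \<in> carrier R" using D by (auto simp: fmats_carrier)
  have "mv R n D (\<lambda>j. if j = s then \<one> else \<zero>) i = (\<Oplus>j\<in>{..<n}. if s = j then D i j else \<zero>)"
    unfolding mv_def by (rule finsum_cong') (use c1 in auto)
  also have "\<dots> = D i s" by (rule finsum_singleton) (use s c1 in auto)
  finally show ?thesis .
qed

end

context field
begin

lemma lincomb_vecs:
  assumes V: "\<And>j. j < r \<Longrightarrow> V j \<in> vecs R n" and lam: "lam \<in> {..<r} \<rightarrow> carrier R"
  shows "lincomb R r lam V \<in> vecs R n"
proof -
  have c: "\<And>j s. j < r \<Longrightarrow> V j s \<in> carrier R" using V vecs_carrier by blast
  have z: "\<And>j s. j < r \<Longrightarrow> n \<le> s \<Longrightarrow> V j s = \<zero>" using V unfolding vecs_def by blast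
  show ?thesis unfolding vecs_def lincomb_def
  proof (intro CollectI conjI allI impI)
    fix s show "(\<Oplus>j\<in>{..<r}. lam j \<otimes> V j s) \<in> carrier R"
      using c lam by (auto intro!: finsum_closed)
  next
    fix s assume "n \<le> s"
    then have "(\<Oplus>j\<in>{..<r}. lam j \<otimes> V j s) = (\<Oplus>j\<in>{..<r}. \<zero>)"
      using z lam by (intro finsum_cong') (auto simp: Pi_def)
    then show "(\<Oplus>j\<in>{..<r}. lam j \<otimes> V j s) = \<zero>" by simp
  qed
qed

lemma lincomb_kernel:
  assumes D: "D \<in> fmats R m n" and V: "\<And>j. j < r \<Longrightarrow> V j \<in> vecs R n"
    and K: "\<And>j. j < r \<Longrightarrow> mv R n D (V j) i = \<zero>" and lam: "lam \<in> {..<r} \<rightarrow> carrier R"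
  shows "mv R n D (lincomb R r lam V) i = \<zero>"
  using V K lam
proof (induction r)
  case 0
  have "(\<Oplus>j\<in>{..<n}. D i j \<otimes> \<zero>) = (\<Oplus>j\<in>{..<n}. \<zero>)"
    by (rule finsum_cong') (auto simp: fmats_carrier[OF D])
  then show ?case unfolding lincomb_def mv_def by simp
next
  case (Suc r)
  have lamr: "lam \<in> {..<r} \<rightarrow> carrier R" "lam r \<in> carrier R" using Suc.prems by auto
  have Vr: "\<And>j. j < r \<Longrightarrow> V j \<in> vecs R n" "V r \<in> vecs R n" using Suc.prems by auto
  have IH: "mv R n D (lincomb R r lam V) i = \<zero>"
    using Suc.IH Suc.prems lamr by auto
  have cV: "\<And>j s. j < Suc r \<Longrightarrow> V j s \<in> carrier R" using Suc.prems(1) vecs_carrier by blast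
  have lv: "lincomb R r lam V \<in> vecs R n" by (rule lincomb_vecs) (use Vr lamr in auto)
  have "lincomb R (Suc r) lam V = (\<lambda>s. \<one> \<otimes> lincomb R r lam V s \<oplus> lam r \<otimes> V r s)"
  proof
    fix s
    have "lincomb R (Suc r) lam V s = lincomb R r lam V s \<oplus> lam r \<otimes> V r s"
      unfolding lincomb_def lessThan_Suc
      by (subst finsum_insert) (use lamr cV in \<open>auto simp: Pi_def intro!: a_comm finsum_closed\<close>)
    also have "\<dots> = \<one> \<otimes> lincomb R r lam V s \<oplus> lam r \<otimes> V r s"
      using lv vecs_carrier by simp
    finally show "lincomb R (Suc r) lam V s = \<one> \<otimes> lincomb R r lam V s \<oplus> lam r \<otimes> V r s" .
  qed
  then have "mv R n D (lincomb R (Suc r) lam V) i = \<one> \<otimes> mv R n D (lincomb R r lam V) i \<oplus> lam r \<otimes> mv R n D (V r) i"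
    using mv_lin[OF D lv Vr(2) one_closed lamr(2)] by simp
  also have "\<dots> = \<zero>" using IH Suc.prems lamr by simp
  finally show ?case .
qed

lemma lincomb_pivot:
  assumes P: "pivots R n r V piv" and j: "j < r" and lam: "lam \<in> {..<r} \<rightarrow> carrier R"
  shows "lincomb R r lam V (piv j) = lam j"
proof -
  have "lincomb R r lam V (piv j) = (\<Oplus>j'\<in>{..<r}. if j = j' then lam j' else \<zero>)"
    unfolding lincomb_def
    by (rule finsum_cong') (use P j lam in \<open>auto simp: pivots_def Pi_def\<close>)
  also have "\<dots> = lam j" by (rule finsum_singleton) (use j lam in auto)
  finally show ?thesis .
qed

lemma lincomb_inj:
  assumes P: "pivots R n r V piv"
  shows "inj_on (\<lambda>lam. lincomb R r lam V) (PiE {..<r} (\<lambda>_. carrier R))"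
proof (rule inj_onI)
  fix a b assume a: "a \<in> PiE {..<r} (\<lambda>_. carrier R)" and b: "b \<in> PiE {..<r} (\<lambda>_. carrier R)"
    and eq: "lincomb R r a V = lincomb R r b V"
  show "a = b"
  proof (rule PiE_ext[OF a b])
    fix j assume j: "j \<in> {..<r}"
    have "a j = lincomb R r a V (piv j)" using lincomb_pivot[OF P, of j a] j a by (auto simp: PiE_def)
    also have "\<dots> = lincomb R r b V (piv j)" using eq by simp
    also have "\<dots> = b j" using lincomb_pivot[OF P, of j b] j b by (auto simp: PiE_def)
    finally show "a j = b j" .
  qed
qed

lemma card_carrier_ge2: "finite (carrier R) \<Longrightarrow> 2 \<le> card (carrier R)"
proof -
  assume f: "finite (carrier R)"
  have "{\<zero>, \<one>} \<subseteq> carrier R" by auto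
  then have "card {\<zero>, \<one>} \<le> card (carrier R)" using f by (rule card_mono[rotated])
  then show ?thesis by simp
qed

lemma finite_vecs: "finite (carrier R) \<Longrightarrow> finite (vecs R n)"
  and card_vecs: "finite (carrier R) \<Longrightarrow> card (vecs R n) \<le> card (carrier R) ^ n"
proof -
  assume f: "finite (carrier R)"
  let ?h = "\<lambda>x. restrict x {..<n}"
  have inj: "inj_on ?h (vecs R n)"
  proof (rule inj_onI)
    fix x y assume x: "x \<in> vecs R n" and y: "y \<in> vecs R n" and e: "?h x = ?h y"
    show "x = y"
    proof
      fix j show "x j = y j"
      proof (cases "j < n")
        case True then show ?thesis using fun_cong[OF e, of j] by simp
      next
        case False then show ?thesis using x y by (auto simp: vecs_def)
      qed
    qed
  qed
  have sub: "?h ` vecs R n \<subseteq> PiE {..<n} (\<lambda>_. carrier R)" unfolding vecs_def by (intro image_subsetI) (simp add: restrict_PiE_iff)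
  have fin: "finite (PiE {..<n} (\<lambda>_. carrier R))" using f by (simp add: finite_PiE)
  show "finite (vecs R n)" using inj_on_finite[OF inj sub fin] .
  have "card (vecs R n) \<le> card (PiE {..<n} (\<lambda>_. carrier R))"
    using card_inj_on_le[OF inj sub fin] .
  also have "\<dots> = card (carrier R) ^ n" by (simp add: card_PiE)
  finally show "card (vecs R n) \<le> card (carrier R) ^ n" .
qed

lemma card_supp_vecs:
  assumes f: "finite (carrier R)" and S: "S \<subseteq> {..<n}"
  shows "card (carrier R) ^ card S \<le> card {s \<in> vecs R n. \<forall>j. j \<notin> S \<longrightarrow> s j = \<zero>}"
proof -
  let ?h = "\<lambda>g j. if j \<in> S then g j else \<zero>"
  have inj: "inj_on ?h (PiE S (\<lambda>_. carrier R))"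
  proof (rule inj_onI)
    fix a b assume a: "a \<in> PiE S (\<lambda>_. carrier R)" and b: "b \<in> PiE S (\<lambda>_. carrier R)" and e: "?h a = ?h b"
    show "a = b"
    proof (rule PiE_ext[OF a b])
      fix j assume "j \<in> S" then show "a j = b j" using fun_cong[OF e, of j] by simp
    qed
  qed
  have sub: "?h ` PiE S (\<lambda>_. carrier R) \<subseteq> {s \<in> vecs R n. \<forall>j. j \<notin> S \<longrightarrow> s j = \<zero>}"
    using S by (auto simp: vecs_def PiE_def Pi_def)
  have fin: "finite {s \<in> vecs R n. \<forall>j. j \<notin> S \<longrightarrow> s j = \<zero>}" using finite_vecs[OF f] by simp
  have "card (carrier R) ^ card S = card (PiE S (\<lambda>_. carrier R))"
    using S finite_subset[OF S] by (simp add: card_PiE)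
  also have "\<dots> \<le> card {s \<in> vecs R n. \<forall>j. j \<notin> S \<longrightarrow> s j = \<zero>}"
    using card_inj_on_le[OF inj sub fin] .
  finally show ?thesis .
qed

lemma finite_fmats: "finite (carrier R) \<Longrightarrow> finite (fmats R m n)"
  and card_fmats: "finite (carrier R) \<Longrightarrow> card (fmats R m n) \<le> card (carrier R) ^ (m * n)"
proof -
  assume f: "finite (carrier R)"
  let ?h = "\<lambda>A. \<lambda>p\<in>{..<m} \<times> {..<n}. A (fst p) (snd p)"
  have inj: "inj_on ?h (fmats R m n)"
  proof (rule inj_onI)
    fix x y assume x: "x \<in> fmats R m n" and y: "y \<in> fmats R m n" and e: "?h x = ?h y"
    show "x = y"
    proof (intro ext)
      fix i j show "x i j = y i j"
      proof (cases "i < m \<and> j < n")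
        case True then show ?thesis using fun_cong[OF e, of "(i,j)"] by simp
      next
        case False then show ?thesis using x y by (auto simp: fmats_def)
      qed
    qed
  qed
  have sub: "?h ` fmats R m n \<subseteq> PiE ({..<m} \<times> {..<n}) (\<lambda>_. carrier R)" unfolding fmats_def by (intro image_subsetI) (auto simp add: restrict_PiE_iff)
  have fin: "finite (PiE ({..<m} \<times> {..<n}) (\<lambda>_. carrier R))" using f by (simp add: finite_PiE)
  show "finite (fmats R m n)" using inj_on_finite[OF inj sub fin] .
  have "card (fmats R m n) \<le> card (PiE ({..<m} \<times> {..<n}) (\<lambda>_. carrier R))"
    using card_inj_on_le[OF inj sub fin] .
  also have "\<dots> = card (carrier R) ^ (m * n)" by (simp add: card_PiE card_cartesian_product)
  finally show "card (fmats R m n) \<le> card (carrier R) ^ (m * n)" .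
qed

end

lemma cols_indepD:
  "cols_indep F m A S \<Longrightarrow> c \<in> S \<rightarrow> carrier F \<Longrightarrow>
    (\<forall>i<m. finsum F (\<lambda>j. c j \<otimes>\<^bsub>F\<^esub> A i j) S = \<zero>\<^bsub>F\<^esub>) \<Longrightarrow> j \<in> S \<Longrightarrow> c j = \<zero>\<^bsub>F\<^esub>"
  unfolding cols_indep_def by blast

context field
begin

lemma sub_eq_zero_iff: "a \<in> carrier R \<Longrightarrow> b \<in> carrier R \<Longrightarrow> a \<ominus> b = \<zero> \<Longrightarrow> a = b"
proof -
  assume a: "a \<in> carrier R" and b: "b \<in> carrier R" and e: "a \<ominus> b = \<zero>"
  have "a = (a \<ominus> b) \<oplus> b" using a b by algebra
  then show "a = b" using e b by simp
qed

lemma mrank_le: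
  assumes "\<And>S. S \<subseteq> {..<n} \<Longrightarrow> cols_indep R m D S \<Longrightarrow> card S \<le> b"
  shows "mrank R m n D \<le> b"
proof -
  have fin: "finite {card S | S. S \<subseteq> {..<n} \<and> cols_indep R m D S}"
  proof -
    have "{card S | S. S \<subseteq> {..<n} \<and> cols_indep R m D S} \<subseteq> card ` Pow {..<n}" by auto
    then show ?thesis by (rule finite_subset) auto
  qed
  have ne: "{card S | S. S \<subseteq> {..<n} \<and> cols_indep R m D S} \<noteq> {}"
  proof -
    have "cols_indep R m D {}" unfolding cols_indep_def by auto
    then show ?thesis by auto
  qed
  show ?thesis unfolding mrank_def using assms by (subst Max_le_iff[OF fin ne]) auto
qed

lemma mrank_le_n: "mrank R m n D \<le> n"
  by (rule mrank_le) (auto intro: card_mono[of "{..<n}", simplified])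

lemma kernel_rank:
  assumes f: "finite (carrier R)" and D: "D \<in> fmats R m n" and P: "pivots R n r V piv"
    and K: "\<And>j i. j < r \<Longrightarrow> i < m \<Longrightarrow> mv R n D (V j) i = \<zero>"
  shows "mrank R m n D + r \<le> n"
proof -
  let ?q = "card (carrier R)"
  have q2: "2 \<le> ?q" using card_carrier_ge2[OF f] .
  have Vv: "\<And>j. j < r \<Longrightarrow> V j \<in> vecs R n" using P unfolding pivots_def by blast
  define KS where "KS = (\<lambda>lam. lincomb R r lam V) ` PiE {..<r} (\<lambda>_. carrier R)"
  have "card KS = card (PiE {..<r} (\<lambda>_. carrier R))"
    unfolding KS_def by (rule card_image[OF lincomb_inj[OF P]])
  also have "\<dots> = ?q ^ r" by (simp add: card_PiE)
  finally have cardKS: "card KS = ?q ^ r" .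
  have KSv: "KS \<subseteq> vecs R n"
  proof
    fix x assume "x \<in> KS"
    then obtain lam where x: "x = lincomb R r lam V" and lam: "lam \<in> PiE {..<r} (\<lambda>_. carrier R)"
      unfolding KS_def by (rule imageE)
    have "lam \<in> {..<r} \<rightarrow> carrier R" using lam by (simp add: PiE_iff)
    then show "x \<in> vecs R n" unfolding x by (intro lincomb_vecs) (use Vv in auto)
  qed
  have KSk: "mv R n D x i = \<zero>" if "x \<in> KS" "i < m" for x i
  proof -
    from that(1) obtain lam where x: "x = lincomb R r lam V" and lam: "lam \<in> PiE {..<r} (\<lambda>_. carrier R)"
      unfolding KS_def by (rule imageE)
    have "lam \<in> {..<r} \<rightarrow> carrier R" using lam by (simp add: PiE_iff)
    then show ?thesis unfolding x by (intro lincomb_kernel[OF D]) (use Vv K that(2) in auto)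
  qed
  have finKS: "finite KS" using finite_subset[OF KSv finite_vecs[OF f]] .
  show ?thesis
  proof -
    have "mrank R m n D \<le> n - r"
    proof (rule mrank_le)
      fix S assume S: "S \<subseteq> {..<n}" and ind: "cols_indep R m D S"
      define SV where "SV = {s \<in> vecs R n. \<forall>j. j \<notin> S \<longrightarrow> s j = \<zero>}"
      have finSV: "finite SV" unfolding SV_def using finite_vecs[OF f] by (rule finite_subset[rotated]) blast
      let ?h = "\<lambda>(s, \<kappa>). (\<lambda>j. \<one> \<otimes> s j \<oplus> \<one> \<otimes> \<kappa> j)"
      have hv: "?h ` (SV \<times> KS) \<subseteq> vecs R n"
      proof (rule image_subsetI)
        fix p assume p: "p \<in> SV \<times> KS"
        then obtain s \<kappa> where ps: "p = (s, \<kappa>)" "s \<in> vecs R n" "\<kappa> \<in> vecs R n"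
          using KSv SV_def by auto
        show "?h p \<in> vecs R n" using ps unfolding vecs_def by auto
      qed
      have inj: "inj_on ?h (SV \<times> KS)"
      proof (rule inj_onI)
        fix p p' assume p: "p \<in> SV \<times> KS" and p': "p' \<in> SV \<times> KS" and e: "?h p = ?h p'"
        obtain s \<kappa> s' \<kappa>' where pp: "p = (s, \<kappa>)" "p' = (s', \<kappa>')" by (cases p, cases p') auto
        have s: "s \<in> vecs R n" "\<forall>j. j \<notin> S \<longrightarrow> s j = \<zero>" "\<kappa> \<in> KS" using p pp SV_def by auto
        have s': "s' \<in> vecs R n" "\<forall>j. j \<notin> S \<longrightarrow> s' j = \<zero>" "\<kappa>' \<in> KS" using p' pp SV_def by auto
        have kv: "\<kappa> \<in> vecs R n" "\<kappa>' \<in> vecs R n" using s s' KSv by auto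
        have e2: "(\<lambda>j. \<one> \<otimes> s j \<oplus> \<one> \<otimes> \<kappa> j) = (\<lambda>j. \<one> \<otimes> s' j \<oplus> \<one> \<otimes> \<kappa>' j)"
          using e pp by simp
        have mvs: "mv R n D s i = mv R n D s' i" if i: "i < m" for i
        proof -
          have "mv R n D s i = \<one> \<otimes> mv R n D s i \<oplus> \<one> \<otimes> mv R n D \<kappa> i"
            using KSk[OF s(3) i] mv_closed[OF D s(1)] by simp
          also have "\<dots> = mv R n D (\<lambda>j. \<one> \<otimes> s j \<oplus> \<one> \<otimes> \<kappa> j) i"
            by (rule mv_lin[symmetric]) (use D s kv in auto)
          also have "\<dots> = mv R n D (\<lambda>j. \<one> \<otimes> s' j \<oplus> \<one> \<otimes> \<kappa>' j) i" using e2 by simp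
          also have "\<dots> = \<one> \<otimes> mv R n D s' i \<oplus> \<one> \<otimes> mv R n D \<kappa>' i"
            by (rule mv_lin) (use D s' kv in auto)
          also have "\<dots> = mv R n D s' i"
            using KSk[OF s'(3) i] mv_closed[OF D s'(1)] by simp
          finally show ?thesis .
        qed
        have sc: "\<And>j. s j \<in> carrier R" "\<And>j. s' j \<in> carrier R" "\<And>j. \<kappa> j \<in> carrier R" "\<And>j. \<kappa>' j \<in> carrier R"
          using s s' kv vecs_carrier by auto
        have Dc: "\<And>i j. D i j \<in> carrier R" using D fmats_carrier by auto
        define c where "c = (\<lambda>j. s j \<ominus> s' j)"
        have sumz: "\<forall>i<m. finsum R (\<lambda>j. c j \<otimes> D i j) S = \<zero>"
        proof (intro allI impI)
          fix i assume i: "i < m"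
          have "finsum R (\<lambda>j. c j \<otimes> D i j) S
              = mv R n D (\<lambda>j. \<one> \<otimes> s j \<oplus> (\<ominus>\<one>) \<otimes> s' j) i"
            unfolding mv_def
          proof (rule add.finprod_mono_neutral_cong_left)
            show "finite {..<n}" by simp
            show "S \<subseteq> {..<n}" using S .
            fix j assume "j \<in> {..<n} - S"
            then show "D i j \<otimes> (\<one> \<otimes> s j \<oplus> \<ominus> \<one> \<otimes> s' j) = \<zero>"
              using s(2) s'(2) Dc by simp
          next
            fix j assume "j \<in> S"
            show "c j \<otimes> D i j = D i j \<otimes> (\<one> \<otimes> s j \<oplus> \<ominus> \<one> \<otimes> s' j)"
              using sc Dc[of i j] unfolding c_def by algebra
          next
            show "(\<lambda>j. D i j \<otimes> (\<one> \<otimes> s j \<oplus> \<ominus> \<one> \<otimes> s' j)) \<in> {..<n} \<rightarrow> carrier R"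
              using sc Dc by auto
          qed
          also have "\<dots> = \<one> \<otimes> mv R n D s i \<oplus> (\<ominus>\<one>) \<otimes> mv R n D s' i"
            by (rule mv_lin) (use D s s' in auto)
          also have "\<dots> = \<zero>" using mvs[OF i] mv_closed[OF D s'(1)]
            by (simp add: l_minus r_neg)
          finally show "finsum R (\<lambda>j. c j \<otimes> D i j) S = \<zero>" .
        qed
        have cS: "c \<in> S \<rightarrow> carrier R" using sc by (auto simp: c_def)
        have c0: "\<forall>j\<in>S. c j = \<zero>"
          using cols_indepD[OF ind cS] sumz by blast
        have ss: "s = s'"
        proof
          fix j show "s j = s' j"
          proof (cases "j \<in> S")
            case True then show ?thesis using c0 sub_eq_zero_iff sc unfolding c_def by blast
          next
            case False then show ?thesis using s(2) s'(2) by simp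
          qed
        qed
        have kk: "\<kappa> = \<kappa>'"
        proof
          fix j
          have "\<one> \<otimes> s j \<oplus> \<one> \<otimes> \<kappa> j = \<one> \<otimes> s j \<oplus> \<one> \<otimes> \<kappa>' j" using fun_cong[OF e2, of j] ss by simp
          then have "s j \<oplus> \<kappa> j = s j \<oplus> \<kappa>' j" using sc by simp
          then have "(\<ominus> s j) \<oplus> (s j \<oplus> \<kappa> j) = (\<ominus> s j) \<oplus> (s j \<oplus> \<kappa>' j)" by simp
          moreover have "(\<ominus> s j) \<oplus> (s j \<oplus> \<kappa> j) = \<kappa> j" using sc by algebra
          moreover have "(\<ominus> s j) \<oplus> (s j \<oplus> \<kappa>' j) = \<kappa>' j" using sc by algebra
          ultimately show "\<kappa> j = \<kappa>' j" by simp
        qed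
        show "p = p'" using pp ss kk by simp
      qed
      have "?q ^ (card S + r) = ?q ^ card S * ?q ^ r" by (simp add: power_add)
      also have "\<dots> \<le> card SV * card KS"
        using card_supp_vecs[OF f S] cardKS unfolding SV_def by (simp add: mult_le_mono1)
      also have "\<dots> = card (SV \<times> KS)" by (simp add: card_cartesian_product)
      also have "\<dots> = card (?h ` (SV \<times> KS))" using card_image[OF inj] by simp
      also have "\<dots> \<le> card (vecs R n)" by (rule card_mono[OF finite_vecs[OF f] hv])
      also have "\<dots> \<le> ?q ^ n" using card_vecs[OF f] .
      finally have X: "?q ^ (card S + r) \<le> ?q ^ n" .
      have "card S + r \<le> n" using power_le_imp_le_exp[of ?q, OF _ X] q2 by simp
      then show "card S \<le> n - r" by simp
    qed
    moreover have "r \<le> n"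
    proof -
      have "?q ^ r \<le> card (vecs R n)" using card_mono[OF finite_vecs[OF f] KSv] cardKS by simp
      also have "\<dots> \<le> ?q ^ n" using card_vecs[OF f] .
      finally have X: "?q ^ r \<le> ?q ^ n" .
      show "r \<le> n" using power_le_imp_le_exp[of ?q, OF _ X] q2 by simp
    qed
    ultimately show ?thesis by simp
  qed
qed

end

context field
begin

lemma diff_fmats: "A \<in> fmats R m n \<Longrightarrow> B \<in> fmats R m n \<Longrightarrow> (\<lambda>i j. A i j \<ominus> B i j) \<in> fmats R m n"
  unfolding fmats_def by (auto simp: minus_eq)

lemma fmats_trivial:
  assumes "m = 0 \<or> n = 0"
  shows "fmats R m n \<subseteq> {\<lambda>i j. \<zero>}"
  using assms unfolding fmats_def by (auto intro!: ext)

lemma mrd_basic: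
  assumes f: "finite (carrier R)" and M: "is_MRD R m n C"
  shows "finite C" "C \<subseteq> fmats R m n" "1 \<le> m" "1 \<le> n"
proof -
  show C: "C \<subseteq> fmats R m n" using M unfolding is_MRD_def by simp
  show fC: "finite C" using finite_subset[OF C finite_fmats[OF f]] .
  have c2: "2 \<le> card C" using M unfolding is_MRD_def by simp
  have mn: "m \<noteq> 0 \<and> n \<noteq> 0"
  proof (rule ccontr)
    assume "\<not> (m \<noteq> 0 \<and> n \<noteq> 0)"
    then have "m = 0 \<or> n = 0" by simp
    then have "C \<subseteq> {\<lambda>i j. \<zero>}" using C fmats_trivial by blast
    then have "card C \<le> 1" using card_mono[of "{\<lambda>i j. \<zero>}" C] by simp
    then show False using c2 by simp
  qed
  then show "1 \<le> m" "1 \<le> n" by auto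
qed

lemma mrd_dist:
  assumes f: "finite (carrier R)" and M: "is_MRD R m n C"
    and A: "A \<in> C" and B: "B \<in> C" and AB: "A \<noteq> B"
  shows "min_dist R m n C \<le> rdist R m n A B"
proof -
  have fC: "finite C" using mrd_basic[OF f M] by simp
  have fin: "finite {rdist R m n A B | A B. A \<in> C \<and> B \<in> C \<and> A \<noteq> B}"
  proof -
    have "{rdist R m n A B | A B. A \<in> C \<and> B \<in> C \<and> A \<noteq> B} \<subseteq> (\<lambda>(A, B). rdist R m n A B) ` (C \<times> C)"
      by auto
    moreover have "finite ((\<lambda>(A, B). rdist R m n A B) ` (C \<times> C))" using fC by simp
    ultimately show ?thesis by (rule finite_subset)
  qed
  show ?thesis unfolding min_dist_def
    by (rule Min_le[OF fin]) (use A B AB in blast)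
qed

lemma d_le_n:
  assumes f: "finite (carrier R)" and M: "is_MRD R m n C"
  shows "min_dist R m n C \<le> n"
proof -
  have c2: "2 \<le> card C" using M unfolding is_MRD_def by simp
  have fC: "finite C" using mrd_basic[OF f M] by simp
  obtain A where A: "A \<in> C" using c2 by fastforce
  have "card (C - {A}) \<ge> 1" using c2 A fC by simp
  then have "C - {A} \<noteq> {}" by (metis card.empty not_one_le_zero)
  then obtain B where B: "B \<in> C - {A}" by blast
  have "A \<in> C" "B \<in> C" "A \<noteq> B" using A B by auto
  then have "min_dist R m n C \<le> rdist R m n A B" using mrd_dist[OF f M] by blast
  also have "\<dots> \<le> n" unfolding rdist_def by (rule mrank_le_n)
  finally show ?thesis .
qed

lemma mrd_unique:
  assumes f: "finite (carrier R)" and M: "is_MRD R m n C"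
    and P: "pivots R n r V piv" and r: "n < r + min_dist R m n C"
    and A: "A \<in> C" and B: "B \<in> C"
    and eq: "\<And>j i. j < r \<Longrightarrow> i < m \<Longrightarrow> mv R n A (V j) i = mv R n B (V j) i"
  shows "A = B"
proof (rule ccontr)
  assume AB: "A \<noteq> B"
  have C: "C \<subseteq> fmats R m n" using mrd_basic[OF f M] by simp
  have Af: "A \<in> fmats R m n" "B \<in> fmats R m n" using A B C by auto
  have Vv: "\<And>j. j < r \<Longrightarrow> V j \<in> vecs R n" using P unfolding pivots_def by blast
  have "mrank R m n (\<lambda>i j. A i j \<ominus> B i j) + r \<le> n"
  proof (rule kernel_rank[OF f diff_fmats[OF Af] P])
    fix j i assume j: "j < r" and i: "i < m"
    have "mv R n (\<lambda>i j. A i j \<ominus> B i j) (V j) i = mv R n A (V j) i \<ominus> mv R n B (V j) i"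
      by (rule mv_diffm[OF Af Vv[OF j]])
    also have "\<dots> = \<zero>" using eq[OF j i] mv_closed[OF Af(2) Vv[OF j]] by (simp add: r_neg minus_eq)
    finally show "mv R n (\<lambda>i j. A i j \<ominus> B i j) (V j) i = \<zero>" .
  qed
  moreover have "min_dist R m n C \<le> mrank R m n (\<lambda>i j. A i j \<ominus> B i j)"
    using mrd_dist[OF f M A B AB] unfolding rdist_def .
  ultimately show False using r by simp
qed

lemma mrd_surj:
  assumes f: "finite (carrier R)" and M: "is_MRD R m n C"
    and P: "pivots R n k V piv" and k: "k = n - min_dist R m n C + 1"
    and T: "T \<in> fmats R m k"
  shows "\<exists>c\<in>C. \<forall>i<m. \<forall>j<k. mv R n c (V j) i = T i j"
proof -
  have C: "C \<subseteq> fmats R m n" and fC: "finite C" using mrd_basic[OF f M] by auto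
  have dn: "min_dist R m n C \<le> n" using d_le_n[OF f M] .
  have Vv: "\<And>j. j < k \<Longrightarrow> V j \<in> vecs R n" using P unfolding pivots_def by blast
  define \<Phi> where "\<Phi> = (\<lambda>c i j. if i < m \<and> j < k then mv R n c (V j) i else \<zero>)"
  have sub: "\<Phi> ` C \<subseteq> fmats R m k"
    unfolding \<Phi>_def fmats_def using C Vv mv_closed by auto
  have inj: "inj_on \<Phi> C"
  proof (rule inj_onI)
    fix A B assume A: "A \<in> C" and B: "B \<in> C" and e: "\<Phi> A = \<Phi> B"
    show "A = B"
    proof (rule mrd_unique[OF f M P _ A B])
      show "n < k + min_dist R m n C" using k dn by simp
      fix j i assume "j < k" "i < m"
      then show "mv R n A (V j) i = mv R n B (V j) i"
        using fun_cong[OF fun_cong[OF e, of i], of j] unfolding \<Phi>_def by simp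
    qed
  qed
  have "card (fmats R m k) \<le> card (carrier R) ^ (m * k)" using card_fmats[OF f] .
  also have "\<dots> = card C" using M k unfolding is_MRD_def by simp
  also have "\<dots> = card (\<Phi> ` C)" using card_image[OF inj] by simp
  finally have "\<Phi> ` C = fmats R m k"
    using card_seteq[OF finite_fmats[OF f] sub] by simp
  then obtain c where c: "c \<in> C" "T = \<Phi> c" using T by auto
  show ?thesis
  proof (rule bexI[OF _ c(1)], intro allI impI)
    fix i j assume "i < m" "j < k"
    then show "mv R n c (V j) i = T i j" using c(2) unfolding \<Phi>_def by simp
  qed
qed

end

definition vM :: "('a, 'b) ring_scheme \<Rightarrow> nat \<Rightarrow> nat \<Rightarrow> (nat \<times> nat \<Rightarrow> 'a) \<Rightarrow> nat \<Rightarrow> nat \<Rightarrow> 'a" where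
  "vM F n K1 M j = (\<lambda>s. if s = 2 + j then \<one>\<^bsub>F\<^esub> else if K1 + 2 \<le> s \<and> s < n then M (j, s - (K1 + 2)) else \<zero>\<^bsub>F\<^esub>)"

definition unitv :: "('a, 'b) ring_scheme \<Rightarrow> nat \<Rightarrow> nat \<Rightarrow> 'a" where
  "unitv F p = (\<lambda>s. if s = p then \<one>\<^bsub>F\<^esub> else \<zero>\<^bsub>F\<^esub>)"

context field
begin

lemma vec_lin: "x \<in> vecs R n \<Longrightarrow> y \<in> vecs R n \<Longrightarrow> a \<in> carrier R \<Longrightarrow> b \<in> carrier R \<Longrightarrow>
  (\<lambda>s. a \<otimes> x s \<oplus> b \<otimes> y s) \<in> vecs R n"
  unfolding vecs_def by auto

lemma unitv_vecs: "p < n \<Longrightarrow> unitv R p \<in> vecs R n"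
  unfolding vecs_def unitv_def by auto

lemma vM_vecs:
  assumes M: "M \<in> PiE ({..<K1} \<times> {..<n - (K1 + 2)}) (\<lambda>_. carrier R)" and j: "j < K1" and n: "K1 + 2 \<le> n"
  shows "vM R n K1 M j \<in> vecs R n"
  unfolding vecs_def vM_def using M j n by (auto simp: PiE_iff)

lemma vM_P: "j' < K1 \<Longrightarrow> vM R n K1 M j (2 + j') = (if j = j' then \<one> else \<zero>)"
  unfolding vM_def by auto

lemma vM_0: "vM R n K1 M j 0 = \<zero>" and vM_1: "vM R n K1 M j 1 = \<zero>"
  unfolding vM_def by auto

lemma vM_Q: "j < K1 \<Longrightarrow> t < n - (K1 + 2) \<Longrightarrow> vM R n K1 M j (K1 + 2 + t) = M (j, t)"
  unfolding vM_def by auto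

lemma pivots_A:
  assumes M: "M \<in> PiE ({..<K1} \<times> {..<n - (K1 + 2)}) (\<lambda>_. carrier R)" and n: "K1 + 2 \<le> n"
  shows "pivots R n (K1 + 1) (\<lambda>j. if j < K1 then vM R n K1 M j else unitv R 0)
            (\<lambda>j. if j < K1 then 2 + j else 0)"
  unfolding pivots_def
proof (intro allI impI conjI)
  fix j assume j: "j < K1 + 1"
  show "(if j < K1 then vM R n K1 M j else unitv R 0) \<in> vecs R n"
    using vM_vecs[OF M _ n] unitv_vecs[of 0 n] n by auto
  show "(if j < K1 then 2 + j else 0) < n" using j n by auto
  fix j' assume j': "j' < K1 + 1"
  show "(if j' < K1 then vM R n K1 M j' else unitv R 0) (if j < K1 then 2 + j else 0) =
        (if j' = j then \<one> else \<zero>)"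
    using j j' by (auto simp: vM_def unitv_def)
qed

lemma pivots_B:
  assumes M: "M \<in> PiE ({..<K1} \<times> {..<n - (K1 + 2)}) (\<lambda>_. carrier R)" and n: "K1 + 2 \<le> n"
  shows "pivots R n (K1 + 2) (\<lambda>j. if j < K1 then vM R n K1 M j else if j = K1 then unitv R 0 else unitv R 1)
            (\<lambda>j. if j < K1 then 2 + j else if j = K1 then 0 else 1)"
  unfolding pivots_def
proof (intro allI impI conjI)
  fix j assume j: "j < K1 + 2"
  show "(if j < K1 then vM R n K1 M j else if j = K1 then unitv R 0 else unitv R 1) \<in> vecs R n"
    using vM_vecs[OF M _ n] unitv_vecs[of 0 n] unitv_vecs[of 1 n] n by auto
  show "(if j < K1 then 2 + j else if j = K1 then 0 else 1) < n" using j n by auto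
  fix j' assume j': "j' < K1 + 2"
  show "(if j' < K1 then vM R n K1 M j' else if j' = K1 then unitv R 0 else unitv R 1)
          (if j < K1 then 2 + j else if j = K1 then 0 else 1) = (if j' = j then \<one> else \<zero>)"
    using j j' by (auto simp: vM_def unitv_def)
qed

lemma pivots_E:
  shows "pivots R n (n - 2) (\<lambda>j. unitv R (j + 2)) (\<lambda>j. j + 2)"
  unfolding pivots_def
proof (intro allI impI conjI)
  fix j assume j: "j < n - 2"
  show "unitv R (j + 2) \<in> vecs R n" using j by (intro unitv_vecs) simp
  show "j + 2 < n" using j by simp
  fix j' assume "j' < n - 2"
  show "unitv R (j' + 2) (j + 2) = (if j' = j then \<one> else \<zero>)" by (simp add: unitv_def)
qed

end

context field
begin

lemma pivots_W:
  assumes M: "M \<in> PiE ({..<K1} \<times> {..<n - (K1 + 2)}) (\<lambda>_. carrier R)"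
    and M': "M' \<in> PiE ({..<K1} \<times> {..<n - (K1 + 2)}) (\<lambda>_. carrier R)"
    and n: "K1 + 2 \<le> n" and j0: "j0 < K1" and t0: "t0 < n - (K1 + 2)"
    and g: "M (j0, t0) \<ominus> M' (j0, t0) \<noteq> \<zero>"
    and w: "w = (\<lambda>s. inv (M (j0, t0) \<ominus> M' (j0, t0)) \<otimes> vM R n K1 M j0 s \<oplus>
                     (\<ominus> (inv (M (j0, t0) \<ominus> M' (j0, t0)))) \<otimes> vM R n K1 M' j0 s)"
  shows "pivots R n (K1 + 1)
           (\<lambda>j. if j < K1 then (\<lambda>s. \<one> \<otimes> vM R n K1 M j s \<oplus> (\<ominus> M (j, t0)) \<otimes> w s) else w)
           (\<lambda>j. if j < K1 then 2 + j else K1 + 2 + t0)"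
proof -
  define \<gamma> where "\<gamma> = M (j0, t0) \<ominus> M' (j0, t0)"
  have Mc: "\<And>j t. j < K1 \<Longrightarrow> t < n - (K1 + 2) \<Longrightarrow> M (j, t) \<in> carrier R"
    using M by (auto simp: PiE_iff)
  have M'c: "\<And>j t. j < K1 \<Longrightarrow> t < n - (K1 + 2) \<Longrightarrow> M' (j, t) \<in> carrier R"
    using M' by (auto simp: PiE_iff)
  have gc: "\<gamma> \<in> carrier R" "\<gamma> \<noteq> \<zero>" using g Mc[OF j0 t0] M'c[OF j0 t0] unfolding \<gamma>_def by auto
  have gu: "\<gamma> \<in> Units R" using gc field_Units by auto
  have gic: "inv \<gamma> \<in> carrier R" using gu by simp
  have gi1: "inv \<gamma> \<otimes> \<gamma> = \<one>" using gu by simp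
  have w': "w = (\<lambda>s. inv \<gamma> \<otimes> vM R n K1 M j0 s \<oplus> (\<ominus> (inv \<gamma>)) \<otimes> vM R n K1 M' j0 s)"
    using w unfolding \<gamma>_def .
  have wv: "w \<in> vecs R n" unfolding w'
    by (rule vec_lin) (use vM_vecs[OF M j0 n] vM_vecs[OF M' j0 n] gic in auto)
  have wP: "w (2 + j') = \<zero>" if j': "j' < K1" for j'
  proof -
    have "vM R n K1 M j0 (2 + j') = vM R n K1 M' j0 (2 + j')" using j' by (simp add: vM_def)
    moreover have "vM R n K1 M' j0 (2 + j') \<in> carrier R" using j' by (simp add: vM_def)
    ultimately show ?thesis unfolding w' using gic by (simp add: l_minus r_neg)
  qed
  have wQ: "w (K1 + 2 + t0) = \<one>"
  proof -
    have e1: "vM R n K1 M j0 (K1 + 2 + t0) = M (j0, t0)" "vM R n K1 M' j0 (K1 + 2 + t0) = M' (j0, t0)"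
      using j0 t0 by (auto simp: vM_def)
    have "w (K1 + 2 + t0) = inv \<gamma> \<otimes> M (j0, t0) \<oplus> (\<ominus> (inv \<gamma>)) \<otimes> M' (j0, t0)" unfolding w' e1 ..
    also have "\<dots> = inv \<gamma> \<otimes> (M (j0, t0) \<ominus> M' (j0, t0))" using gic Mc[OF j0 t0] M'c[OF j0 t0] by algebra
    also have "\<dots> = inv \<gamma> \<otimes> \<gamma>" unfolding \<gamma>_def ..
    finally show ?thesis using gi1 by simp
  qed
  have w0: "w s \<in> carrier R" for s using wv vecs_carrier by blast
  show ?thesis
    unfolding pivots_def
  proof (intro allI impI conjI)
    fix j assume j: "j < K1 + 1"
    show "(if j < K1 then (\<lambda>s. \<one> \<otimes> vM R n K1 M j s \<oplus> (\<ominus> M (j, t0)) \<otimes> w s) else w) \<in> vecs R n"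
    proof (cases "j < K1")
      case True
      then show ?thesis using vec_lin[OF vM_vecs[OF M True n] wv one_closed, of "\<ominus> M (j, t0)"] Mc[OF True t0] by simp
    next
      case False then show ?thesis using wv by simp
    qed
    show "(if j < K1 then 2 + j else K1 + 2 + t0) < n" using j n t0 by auto
    fix j' assume j': "j' < K1 + 1"
    show "(if j' < K1 then (\<lambda>s. \<one> \<otimes> vM R n K1 M j' s \<oplus> (\<ominus> M (j', t0)) \<otimes> w s) else w)
            (if j < K1 then 2 + j else K1 + 2 + t0) = (if j' = j then \<one> else \<zero>)"
    proof (cases "j < K1")
      case jT: True
      show ?thesis
      proof (cases "j' < K1")
        case True
        have "vM R n K1 M j' (2 + j) = (if j' = j then \<one> else \<zero>)" using jT by (simp add: vM_def)
        then show ?thesis using True jT wP[OF jT] Mc[OF True t0] by simp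
      next
        case False
        then show ?thesis using jT wP[OF jT] j' by simp
      qed
    next
      case jF: False
      then have jK: "j = K1" using j by simp
      show ?thesis
      proof (cases "j' < K1")
        case True
        have "vM R n K1 M j' (K1 + 2 + t0) = M (j', t0)" using True t0 by (simp add: vM_def, linarith)
        then show ?thesis using True jF jK wQ Mc[OF True t0] by (simp add: l_minus r_neg)
      next
        case False
        then show ?thesis using jF jK wQ j' by simp
      qed
    qed
  qed
qed

end

lemma pigeon:
  assumes A: "finite A" and B: "finite B" and fAB: "f ` A \<subseteq> B" and lt: "(l - 1) * card B < card A" and l: "1 \<le> l"
  shows "\<exists>b. l \<le> card {a\<in>A. f a = b}"
proof (rule ccontr)
  assume "\<not> ?thesis"
  then have h0: "\<forall>b. card {a\<in>A. f a = b} < l" by (simp add: not_le)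
  have h: "card {a\<in>A. f a = b} \<le> l - 1" for b
    using spec[OF h0, of b] by linarith
  have "A = (\<Union>b\<in>B. {a\<in>A. f a = b})" using fAB by auto
  then have "card A \<le> (\<Sum>b\<in>B. card {a\<in>A. f a = b})" using card_UN_le[OF B, of "\<lambda>b. {a\<in>A. f a = b}"] by simp
  also have "\<dots> \<le> (\<Sum>b\<in>B. l - 1)" by (rule sum_mono) (use h in auto)
  also have "\<dots> = card B * (l - 1)" by simp
  finally show False using lt by (simp add: mult.commute)
qed

context field
begin

lemma add_one_neq: "a \<in> carrier R \<Longrightarrow> a \<oplus> \<one> \<noteq> a"
proof
  assume a: "a \<in> carrier R" and e: "a \<oplus> \<one> = a"
  have "\<one> = (\<ominus> a) \<oplus> (a \<oplus> \<one>)" using a by algebra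
  also have "\<dots> = \<zero>" using e a by (simp add: l_neg)
  finally show False by simp
qed

lemma core:
  assumes f: "finite (carrier R)" and MRD: "is_MRD R m n C" and l: "2 \<le> l"
    and d3: "3 \<le> min_dist R m n C" and nd: "min_dist R m n C < n"
    and big: "(l - 1) * card (carrier R) ^ m <
              card (carrier R) ^ ((n - min_dist R m n C) * (min_dist R m n C - 2))"
  shows "\<exists>y \<in> fmats R m n. \<exists>cs. inj_on cs {..l} \<and> cs ` {..l} \<subseteq> C \<and>
           (\<Sum>i\<le>l. rdist R m n y (cs i)) \<le> 2 + l * (min_dist R m n C - 2)"
proof -
  define d where "d = min_dist R m n C"
  define K1 where "K1 = n - d"
  have K1: "1 \<le> K1" "n = K1 + d" "K1 + 2 \<le> n" "n - (K1 + 2) = d - 2" "K1 + 1 = n - d + 1"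
    using d3 nd unfolding K1_def d_def by auto
  have C: "C \<subseteq> fmats R m n" and fC: "finite C" and m1: "1 \<le> m" and n1: "1 \<le> n"
    using mrd_basic[OF f MRD] by auto
  have c2: "2 \<le> card C" using MRD unfolding is_MRD_def by simp
  obtain c0 where c0: "c0 \<in> C" using c2 by fastforce
  have c0f: "c0 \<in> fmats R m n" using c0 C by auto
  have c0c: "\<And>i j. c0 i j \<in> carrier R" using fmats_carrier[OF c0f] .
  define Mset where "Mset = PiE ({..<K1} \<times> {..<n - (K1 + 2)}) (\<lambda>_. carrier R)"
  define \<alpha> where "\<alpha> = (\<lambda>i::nat. if i = 0 then \<one> else \<zero>)"
  have \<alpha>c: "\<And>i. \<alpha> i \<in> carrier R" unfolding \<alpha>_def by auto
  define VA where "VA = (\<lambda>M j. if j < K1 then vM R n K1 M j else unitv R 0)"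
  define T where "T = (\<lambda>M i j. if i < m \<and> j < K1 then mv R n c0 (vM R n K1 M j) i
                               else if i < m \<and> j = K1 then c0 i 0 \<oplus> \<alpha> i else \<zero>)"
  define cM where "cM = (\<lambda>M. SOME c. c \<in> C \<and> (\<forall>i<m. \<forall>j<K1 + 1. mv R n c (VA M j) i = T M i j))"
  have cM_prop: "cM M \<in> C \<and> (\<forall>i<m. \<forall>j<K1 + 1. mv R n (cM M) (VA M j) i = T M i j)"
    if M: "M \<in> Mset" for M
  proof -
    have P: "pivots R n (K1 + 1) (VA M) (\<lambda>j. if j < K1 then 2 + j else 0)"
      unfolding VA_def using pivots_A[OF M[unfolded Mset_def] K1(3)] .
    have Tf: "T M \<in> fmats R m (K1 + 1)"
      unfolding fmats_def T_def
      using mv_closed[OF c0f vM_vecs[OF M[unfolded Mset_def] _ K1(3)]] c0c \<alpha>c by auto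
    have "\<exists>c\<in>C. \<forall>i<m. \<forall>j<K1 + 1. mv R n c (VA M j) i = T M i j"
      by (rule mrd_surj[OF f MRD P _ Tf]) (use K1(5) d_def in simp)
    then have "\<exists>c. c \<in> C \<and> (\<forall>i<m. \<forall>j<K1 + 1. mv R n c (VA M j) i = T M i j)" by blast
    then show ?thesis unfolding cM_def by (rule someI_ex)
  qed
  have cM_in: "\<And>M. M \<in> Mset \<Longrightarrow> cM M \<in> C" using cM_prop by blast
  have cM_f: "\<And>M. M \<in> Mset \<Longrightarrow> cM M \<in> fmats R m n" using cM_in C by blast
  have cM_v: "mv R n (cM M) (vM R n K1 M j) i = mv R n c0 (vM R n K1 M j) i"
    if M: "M \<in> Mset" and i: "i < m" and j: "j < K1" for M i j
  proof -
    have "mv R n (cM M) (VA M j) i = T M i j" using cM_prop[OF M] i j by simp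
    then show ?thesis using i j unfolding VA_def T_def by simp
  qed
  have cM_0: "cM M i 0 = c0 i 0 \<oplus> \<alpha> i" if M: "M \<in> Mset" and i: "i < m" for M i
  proof -
    have "mv R n (cM M) (VA M K1) i = T M i K1" using cM_prop[OF M] i by simp
    moreover have "mv R n (cM M) (VA M K1) i = cM M i 0"
      unfolding VA_def unitv_def using mv_unit[OF cM_f[OF M], of 0] n1 by simp
    ultimately show ?thesis unfolding T_def using i by simp
  qed
  have cM_ne: "cM M \<noteq> c0" if M: "M \<in> Mset" for M
  proof
    assume e: "cM M = c0"
    have "cM M 0 0 = c0 0 0 \<oplus> \<one>" using cM_0[OF M, of 0] m1 unfolding \<alpha>_def by simp
    then show False using e add_one_neq[OF c0c[of 0 0]] by simp
  qed
  have vMv: "\<And>M j. M \<in> Mset \<Longrightarrow> j < K1 \<Longrightarrow> vM R n K1 M j \<in> vecs R n"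
    using vM_vecs K1(3) unfolding Mset_def by blast
  have cM_inj: "inj_on cM Mset"
  proof (rule inj_onI, rule ccontr)
    fix M M' assume M: "M \<in> Mset" and M': "M' \<in> Mset" and e: "cM M = cM M'" and ne: "M \<noteq> M'"
    obtain j0 t0 where jt: "j0 < K1" "t0 < n - (K1 + 2)" and neq: "M (j0, t0) \<noteq> M' (j0, t0)"
    proof -
      have "\<exists>x\<in>{..<K1} \<times> {..<n - (K1 + 2)}. M x \<noteq> M' x"
      proof (rule ccontr)
        assume "\<not> ?thesis"
        then have "M = M'" using PiE_ext[OF M[unfolded Mset_def] M'[unfolded Mset_def]] by blast
        then show False using ne by simp
      qed
      then show ?thesis using that by auto
    qed
    have Mc: "M (j0, t0) \<in> carrier R" "M' (j0, t0) \<in> carrier R"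
      using M M' jt unfolding Mset_def by (auto simp: PiE_iff)
    have g: "M (j0, t0) \<ominus> M' (j0, t0) \<noteq> \<zero>" using neq sub_eq_zero_iff Mc by blast
    define gi where "gi = inv (M (j0, t0) \<ominus> M' (j0, t0))"
    have gic: "gi \<in> carrier R" unfolding gi_def using g Mc field_Units by auto
    define w where "w = (\<lambda>s. gi \<otimes> vM R n K1 M j0 s \<oplus> (\<ominus> gi) \<otimes> vM R n K1 M' j0 s)"
    have Pw: "pivots R n (K1 + 1)
           (\<lambda>j. if j < K1 then (\<lambda>s. \<one> \<otimes> vM R n K1 M j s \<oplus> (\<ominus> M (j, t0)) \<otimes> w s) else w)
           (\<lambda>j. if j < K1 then 2 + j else K1 + 2 + t0)"
      by (rule pivots_W[OF M[unfolded Mset_def] M'[unfolded Mset_def] K1(3) jt g]) (simp add: w_def gi_def)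
    have wv: "w \<in> vecs R n" unfolding w_def
      by (rule vec_lin) (use vMv[OF M jt(1)] vMv[OF M' jt(1)] gic in auto)
    have c: "cM M \<in> C" "cM M \<in> fmats R m n" using cM_in[OF M] cM_f[OF M] by auto
    have eqw: "mv R n (cM M) w i = mv R n c0 w i" if i: "i < m" for i
    proof -
      have "mv R n (cM M) w i = gi \<otimes> mv R n (cM M) (vM R n K1 M j0) i \<oplus> (\<ominus> gi) \<otimes> mv R n (cM M) (vM R n K1 M' j0) i"
        unfolding w_def by (rule mv_lin) (use c vMv[OF M jt(1)] vMv[OF M' jt(1)] gic in auto)
      also have "\<dots> = gi \<otimes> mv R n c0 (vM R n K1 M j0) i \<oplus> (\<ominus> gi) \<otimes> mv R n c0 (vM R n K1 M' j0) i"
        using cM_v[OF M i jt(1)] cM_v[OF M' i jt(1)] e by simp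
      also have "\<dots> = mv R n c0 w i"
        unfolding w_def by (rule mv_lin[symmetric]) (use c0f vMv[OF M jt(1)] vMv[OF M' jt(1)] gic in auto)
      finally show ?thesis .
    qed
    have "cM M = c0"
    proof (rule mrd_unique[OF f MRD Pw _ c(1) c0])
      show "n < K1 + 1 + min_dist R m n C" using K1(2) d_def by simp
      fix j i assume j: "j < K1 + 1" and i: "i < m"
      show "mv R n (cM M) ((\<lambda>j. if j < K1 then (\<lambda>s. \<one> \<otimes> vM R n K1 M j s \<oplus> (\<ominus> M (j, t0)) \<otimes> w s) else w) j) i =
            mv R n c0 ((\<lambda>j. if j < K1 then (\<lambda>s. \<one> \<otimes> vM R n K1 M j s \<oplus> (\<ominus> M (j, t0)) \<otimes> w s) else w) j) i"
      proof (cases "j < K1")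
        case True
        have Mjc: "M (j, t0) \<in> carrier R" using M True jt unfolding Mset_def by (auto simp: PiE_iff)
        have "mv R n (cM M) (\<lambda>s. \<one> \<otimes> vM R n K1 M j s \<oplus> (\<ominus> M (j, t0)) \<otimes> w s) i =
              \<one> \<otimes> mv R n (cM M) (vM R n K1 M j) i \<oplus> (\<ominus> M (j, t0)) \<otimes> mv R n (cM M) w i"
          by (rule mv_lin) (use c vMv[OF M True] wv Mjc in auto)
        also have "\<dots> = \<one> \<otimes> mv R n c0 (vM R n K1 M j) i \<oplus> (\<ominus> M (j, t0)) \<otimes> mv R n c0 w i"
          using cM_v[OF M i True] eqw[OF i] by simp
        also have "\<dots> = mv R n c0 (\<lambda>s. \<one> \<otimes> vM R n K1 M j s \<oplus> (\<ominus> M (j, t0)) \<otimes> w s) i"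
          by (rule mv_lin[symmetric]) (use c0f vMv[OF M True] wv Mjc in auto)
        finally show ?thesis using True by simp
      next
        case False
        then show ?thesis using eqw[OF i] by simp
      qed
    qed
    then show False using cM_ne[OF M] by simp
  qed
  define fM where "fM = (\<lambda>M i. if i < m then cM M i 1 \<ominus> c0 i 1 else \<zero>)"
  have fMv: "fM ` Mset \<subseteq> vecs R m"
  proof
    fix x assume "x \<in> fM ` Mset"
    then obtain M where M: "M \<in> Mset" and x: "x = fM M" by blast
    show "x \<in> vecs R m" unfolding x fM_def vecs_def
      using fmats_carrier[OF cM_f[OF M]] c0c by auto
  qed
  have finM: "finite Mset" unfolding Mset_def using f by (simp add: finite_PiE)
  have cardM: "card Mset = card (carrier R) ^ (K1 * (d - 2))"
    unfolding Mset_def using K1(4) by (simp add: card_PiE card_cartesian_product power_mult)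
  have "(l - 1) * card (vecs R m) \<le> (l - 1) * card (carrier R) ^ m"
    using card_vecs[OF f] by simp
  also have "\<dots> < card Mset" using big cardM unfolding K1_def d_def by simp
  finally have lt: "(l - 1) * card (vecs R m) < card Mset" .
  obtain \<beta> where \<beta>: "l \<le> card {M \<in> Mset. fM M = \<beta>}"
    using pigeon[OF finM finite_vecs[OF f] fMv lt] l by auto
  obtain Sub where Sub: "Sub \<subseteq> {M \<in> Mset. fM M = \<beta>}" "card Sub = l"
    using obtain_subset_with_card_n[OF \<beta>] by blast
  have finSub: "finite Sub" using Sub l by (metis card.infinite not_numeral_le_zero)
  obtain g where g: "bij_betw g {0..<l} Sub"
    using ex_bij_betw_nat_finite[OF finSub] Sub(2) by auto
  have gM: "\<And>i. i < l \<Longrightarrow> g i \<in> Mset" "\<And>i. i < l \<Longrightarrow> fM (g i) = \<beta>"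
    using g Sub(1) unfolding bij_betw_def by (auto simp: image_subset_iff)
  have \<beta>v: "\<beta> \<in> vecs R m" using gM[of 0] l fMv by force
  have \<beta>c: "\<And>i. \<beta> i \<in> carrier R" using vecs_carrier[OF \<beta>v] .
  define y where "y = (\<lambda>i j. if i < m \<and> j = 0 then c0 i 0 \<oplus> \<alpha> i
                           else if i < m \<and> j = 1 then c0 i 1 \<oplus> \<beta> i else c0 i j)"
  have yf: "y \<in> fmats R m n"
    unfolding fmats_def y_def using c0f c0c \<alpha>c \<beta>c K1(3) unfolding fmats_def by auto
  have yc: "\<And>i j. y i j \<in> carrier R" using fmats_carrier[OF yf] .
  define cs where "cs = (\<lambda>i. if i = 0 then c0 else cM (g (i - 1)))"
  have cs_inj: "inj_on cs {..l}"
  proof (rule inj_onI)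
    fix i i' assume i: "i \<in> {..l}" and i': "i' \<in> {..l}" and e: "cs i = cs i'"
    show "i = i'"
    proof (cases "i = 0")
      case True
      show ?thesis
      proof (rule ccontr)
        assume "i \<noteq> i'"
        then have "cM (g (i' - 1)) = c0" using e True unfolding cs_def by auto
        moreover have "g (i' - 1) \<in> Mset" using gM(1)[of "i' - 1"] i' \<open>i \<noteq> i'\<close> True by auto
        ultimately show False using cM_ne by blast
      qed
    next
      case False
      show ?thesis
      proof (cases "i' = 0")
        case True
        then have "cM (g (i - 1)) = c0" using e False unfolding cs_def by auto
        moreover have "g (i - 1) \<in> Mset" using gM(1)[of "i - 1"] i False by auto
        ultimately show ?thesis using cM_ne by blast
      next
        case F2: False
        have "cM (g (i - 1)) = cM (g (i' - 1))" using e False F2 unfolding cs_def by simp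
        then have "g (i - 1) = g (i' - 1)"
          using cM_inj gM(1)[of "i - 1"] gM(1)[of "i' - 1"] i i' False F2 unfolding inj_on_def by auto
        then have "i - 1 = i' - 1"
          using g i i' False F2 unfolding bij_betw_def inj_on_def by auto
        then show ?thesis using False F2 by simp
      qed
    qed
  qed
  have cs_C: "cs ` {..l} \<subseteq> C"
    unfolding cs_def using c0 cM_in gM(1) by auto
  have r0: "rdist R m n y c0 \<le> 2"
  proof -
    have "mrank R m n (\<lambda>i j. y i j \<ominus> c0 i j) + (n - 2) \<le> n"
    proof (rule kernel_rank[OF f diff_fmats[OF yf c0f] pivots_E])
      fix j i assume j: "j < n - 2" and i: "i < m"
      have "mv R n (\<lambda>i j. y i j \<ominus> c0 i j) (unitv R (j + 2)) i = y i (j + 2) \<ominus> c0 i (j + 2)"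
        unfolding unitv_def using mv_unit[OF diff_fmats[OF yf c0f], of "j + 2" i] j by simp
      also have "\<dots> = \<zero>" unfolding y_def using c0c by (simp add: r_neg minus_eq)
      finally show "mv R n (\<lambda>i j. y i j \<ominus> c0 i j) (unitv R (j + 2)) i = \<zero>" .
    qed
    then show ?thesis unfolding rdist_def by simp
  qed
  have rM: "rdist R m n y (cM M) \<le> d - 2" if M: "M \<in> Mset" and fb: "fM M = \<beta>" for M
  proof -
    let ?V = "\<lambda>j. if j < K1 then vM R n K1 M j else if j = K1 then unitv R 0 else unitv R 1"
    have P: "pivots R n (K1 + 2) ?V (\<lambda>j. if j < K1 then 2 + j else if j = K1 then 0 else 1)"
      using pivots_B[OF M[unfolded Mset_def] K1(3)] .
    have Vv: "\<And>j. j < K1 + 2 \<Longrightarrow> ?V j \<in> vecs R n" using P unfolding pivots_def by blast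
    have cf: "cM M \<in> fmats R m n" using cM_f[OF M] .
    have "mrank R m n (\<lambda>i j. y i j \<ominus> cM M i j) + (K1 + 2) \<le> n"
    proof (rule kernel_rank[OF f diff_fmats[OF yf cf] P])
      fix j i assume j: "j < K1 + 2" and i: "i < m"
      have eq: "mv R n y (?V j) i = mv R n (cM M) (?V j) i"
      proof -
        consider (a) "j < K1" | (b) "j = K1" | (c) "j = K1 + 1" using j by linarith
        then show ?thesis
        proof cases
          case a
          have "mv R n y (vM R n K1 M j) i = mv R n c0 (vM R n K1 M j) i"
            unfolding mv_def
          proof (rule finsum_cong')
            fix s assume "s \<in> {..<n}"
            show "y i s \<otimes> vM R n K1 M j s = c0 i s \<otimes> vM R n K1 M j s"
            proof (cases "s = 0 \<or> s = 1")
              case True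
              then have "vM R n K1 M j s = \<zero>" using vM_0 vM_1 by auto
              then show ?thesis using yc c0c by simp
            next
              case False then show ?thesis unfolding y_def by auto
            qed
          next
            show "(\<lambda>s. c0 i s \<otimes> vM R n K1 M j s) \<in> {..<n} \<rightarrow> carrier R"
              using c0c vecs_carrier[OF vMv[OF M a]] by auto
          qed simp
          then show ?thesis using a cM_v[OF M i a] by simp
        next
          case b
          have "mv R n y (unitv R 0) i = y i 0" unfolding unitv_def using mv_unit[OF yf, of 0 i] n1 by simp
          moreover have "mv R n (cM M) (unitv R 0) i = cM M i 0" unfolding unitv_def using mv_unit[OF cf, of 0 i] n1 by simp
          ultimately show ?thesis using b cM_0[OF M i] i unfolding y_def by simp
        next
          case c
          have "mv R n y (unitv R 1) i = y i 1" unfolding unitv_def using mv_unit[OF yf, of 1 i] K1(3) by simp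
          moreover have "mv R n (cM M) (unitv R 1) i = cM M i 1" unfolding unitv_def using mv_unit[OF cf, of 1 i] K1(3) by simp
          moreover have "cM M i 1 = c0 i 1 \<oplus> \<beta> i"
          proof -
            have "\<beta> i = cM M i 1 \<ominus> c0 i 1" using fb i unfolding fM_def by auto
            moreover have "cM M i 1 = c0 i 1 \<oplus> (cM M i 1 \<ominus> c0 i 1)"
              using fmats_carrier[OF cf] c0c by algebra
            ultimately show ?thesis by simp
          qed
          ultimately show ?thesis using c i unfolding y_def by simp
        qed
      qed
      have "mv R n (\<lambda>i j. y i j \<ominus> cM M i j) (?V j) i = mv R n y (?V j) i \<ominus> mv R n (cM M) (?V j) i"
        by (rule mv_diffm[OF yf cf Vv[OF j]])
      also have "\<dots> = \<zero>" using eq mv_closed[OF cf Vv[OF j]] by (simp add: r_neg minus_eq)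
      finally show "mv R n (\<lambda>i j. y i j \<ominus> cM M i j) (?V j) i = \<zero>" .
    qed
    then show ?thesis unfolding rdist_def using K1(2) by simp
  qed
  have "(\<Sum>i\<le>l. rdist R m n y (cs i)) \<le> (\<Sum>i\<le>l. if i = 0 then 2 else d - 2)"
  proof (rule sum_mono)
    fix i assume i: "i \<in> {..l}"
    show "rdist R m n y (cs i) \<le> (if i = 0 then 2 else d - 2)"
    proof (cases "i = 0")
      case True then show ?thesis using r0 unfolding cs_def by simp
    next
      case False
      then have "i - 1 < l" using i by auto
      then show ?thesis using False rM[OF gM(1) gM(2)] unfolding cs_def by simp
    qed
  qed
  also have "\<dots> = 2 + l * (d - 2)" by (simp add: sum.atMost_shift)
  finally show ?thesis using yf cs_inj cs_C unfolding d_def by blast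
qed

end

context field
begin

lemma rate_eq:
  assumes f: "finite (carrier R)" and MRD: "is_MRD R m n C"
  shows "real n * code_rate R m n C = real n - real (min_dist R m n C) + 1"
proof -
  let ?q = "card (carrier R)"
  have q2: "2 \<le> ?q" using card_carrier_ge2[OF f] .
  have m1: "1 \<le> m" and n1: "1 \<le> n" using mrd_basic[OF f MRD] by auto
  have dn: "min_dist R m n C \<le> n" using d_le_n[OF f MRD] .
  have cC: "card C = ?q ^ (m * (n - min_dist R m n C + 1))" using MRD unfolding is_MRD_def by simp
  have "log (real ?q) (real (card C)) = real (m * (n - min_dist R m n C + 1))"
    unfolding cC of_nat_power using q2 by (subst log_pow_cancel) auto
  then have L: "log (real ?q) (real (card C)) = real m * real (n - min_dist R m n C + 1)"
    by (simp only: of_nat_mult)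
  have cr: "code_rate R m n C = real m * real (n - min_dist R m n C + 1) / (real n * real m)"
    unfolding code_rate_def L ..
  have nz: "real m \<noteq> 0" "real n \<noteq> 0" using m1 n1 by auto
  have "real n * code_rate R m n C = real (n - min_dist R m n C + 1)"
    unfolding cr using nz by (simp add: field_simps)
  then show ?thesis using dn by (simp add: of_nat_diff)
qed

lemma main_bound:
  assumes f: "finite (carrier R)" and MRD: "is_MRD R m n C" and l: "2 \<le> l"
    and LD: "avg_list_dec R m n C (real l * (1 - code_rate R m n C) / real (l + 1)) l"
  shows "real (n - min_dist R m n C) * (real (min_dist R m n C) - real l) \<le> real (l + 1) * real m"
proof -
  define d where "d = min_dist R m n C"
  let ?q = "card (carrier R)"
  have q2: "2 \<le> ?q" using card_carrier_ge2[OF f] .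
  have m1: "1 \<le> m" and n1: "1 \<le> n" using mrd_basic[OF f MRD] by auto
  have dn: "d \<le> n" using d_le_n[OF f MRD] unfolding d_def .
  show ?thesis
  proof (cases "d \<le> l \<or> d = n")
    case True
    then have "real (n - d) * (real d - real l) \<le> 0"
      by (auto intro: mult_nonneg_nonpos)
    moreover have "0 \<le> real (l + 1) * real m" by simp
    ultimately show ?thesis unfolding d_def by linarith
  next
    case False
    then have d3: "3 \<le> d" and nd: "d < n" using l dn by auto
    have key: "(n - d) * (d - 2) < m + l"
    proof (rule ccontr)
      assume "\<not> ?thesis"
      then have ge: "m + l \<le> (n - d) * (d - 2)" by simp
      have "(l - 1) * ?q ^ m < 2 ^ l * ?q ^ m"
      proof -
        have "l - 1 < 2 ^ l" using less_exp[of l] by linarith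
        then show ?thesis using q2 by simp
      qed
      also have "\<dots> \<le> ?q ^ l * ?q ^ m" using q2 by (simp add: power_mono)
      also have "\<dots> = ?q ^ (m + l)" by (simp add: power_add)
      also have "\<dots> \<le> ?q ^ ((n - d) * (d - 2))" using ge q2 by (intro power_increasing) auto
      finally have big: "(l - 1) * ?q ^ m < ?q ^ ((n - d) * (d - 2))" .
      obtain y cs where y: "y \<in> fmats R m n" and cs: "inj_on cs {..l}" "cs ` {..l} \<subseteq> C"
        and S: "(\<Sum>i\<le>l. rdist R m n y (cs i)) \<le> 2 + l * (d - 2)"
        using core[OF f MRD l d3[unfolded d_def] nd[unfolded d_def] big[unfolded d_def]] unfolding d_def by blast
      have S2: "(\<Sum>i\<le>l. rdist R m n y (cs i)) \<le> l * (d - 1)"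
      proof -
        have "2 + l * (d - 2) \<le> l * (d - 1)"
        proof -
          have "l * (d - 1) = l * (d - 2) + l" using d3 by (simp add: algebra_simps)
          then show ?thesis using l by simp
        qed
        then show ?thesis using S by simp
      qed
      have A0: "(\<Sum>i\<le>l. real (rdist R m n y (cs i))) / real (l + 1) >
              real l * (1 - code_rate R m n C) / real (l + 1) * real n"
        using LD y cs unfolding avg_list_dec_def by blast
      have A1: "real l * (1 - code_rate R m n C) / real (l + 1) * real n =
                     real (l * (d - 1)) / real (l + 1)"
      proof -
        have "real n * code_rate R m n C = real n - real d + 1" using rate_eq[OF f MRD] unfolding d_def .
        moreover have "real l * (1 - code_rate R m n C) * real n = real l * (real n - real n * code_rate R m n C)"
          by (simp add: algebra_simps)
        ultimately have "real l * (1 - code_rate R m n C) * real n = real l * (real d - 1)"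
          by simp
        then show ?thesis using d3 by (simp add: of_nat_diff)
      qed
      have A2: "(\<Sum>i\<le>l. real (rdist R m n y (cs i))) \<le> real (l * (d - 1))"
      proof -
        have "(\<Sum>i\<le>l. real (rdist R m n y (cs i))) = real (\<Sum>i\<le>l. rdist R m n y (cs i))" by simp
        also have "\<dots> \<le> real (l * (d - 1))" using S2 by (simp only: of_nat_le_iff)
        finally show ?thesis .
      qed
      have A3: "(\<Sum>i\<le>l. real (rdist R m n y (cs i))) / real (l + 1) \<le> real (l * (d - 1)) / real (l + 1)"
        by (rule divide_right_mono[OF A2]) simp
      show False using A0 A1 A3 by linarith
    qed
    have "real (n - d) * (real d - real l) \<le> real (n - d) * (real d - 2)"
      using l by (intro mult_left_mono) auto
    also have "\<dots> = real ((n - d) * (d - 2))" using d3 by (simp add: of_nat_diff)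
    also have "\<dots> \<le> real (m + l - 1)" using key by (simp only: of_nat_le_iff)
    also have "\<dots> \<le> real (l + 1) * real m"
    proof -
      have h1: "l \<le> l * m" using m1 by simp
      have "(l + 1) * m = l * m + m" by (simp add: algebra_simps)
      then have "m + l - 1 \<le> (l + 1) * m" using h1 by linarith
      then have "real (m + l - 1) \<le> real ((l + 1) * m)" by (simp only: of_nat_le_iff)
      then show ?thesis by (simp add: algebra_simps)
    qed
    finally show ?thesis unfolding d_def .
  qed
qed

end

theorem theoremA1:
  fixes l :: nat
  assumes "2 \<le> l"
  shows "\<exists>cl > 0.
    (\<forall>(F :: nat ring) m n C. field F \<and> finite (carrier F) \<and> n \<le> m \<and> is_MRD F m n C \<and>
        avg_list_dec F m n C (real l * (1 - code_rate F m n C) / real (l + 1)) l \<longrightarrow>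
        real m \<ge> cl * (real n * code_rate F m n C - 1) *
                   (real n - real l - real n * code_rate F m n C + 1)) \<and>
    (\<forall>c > 0. \<exists>c' > 0. \<forall>(F :: nat ring) m n C. field F \<and> finite (carrier F) \<and> n \<le> m \<and> is_MRD F m n C \<and>
        avg_list_dec F m n C (real l * (1 - code_rate F m n C) / real (l + 1)) l \<and>
        c \<le> code_rate F m n C \<and> code_rate F m n C \<le> 1 - c - real l / real n \<longrightarrow>
        real m \<ge> c' * real n ^ 2)"
proof -
  define cl where "cl = 1 / real (l + 1)"
  have clpos: "cl > 0" unfolding cl_def by simp
  have P1: "real m \<ge> cl * (real n * code_rate F m n C - 1) * (real n - real l - real n * code_rate F m n C + 1)"
    and P1': "real n * code_rate F m n C - 1 \<ge> 0"
    if F: "field F" "finite (carrier F)" "is_MRD F m n C"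
      "avg_list_dec F m n C (real l * (1 - code_rate F m n C) / real (l + 1)) l"
    for F :: "nat ring" and m n C
  proof -
    have MB: "real (n - min_dist F m n C) * (real (min_dist F m n C) - real l) \<le> real (l + 1) * real m"
      using field.main_bound[OF F(1) F(2) F(3) assms F(4)] .
    have RE: "real n * code_rate F m n C = real n - real (min_dist F m n C) + 1"
      using field.rate_eq[OF F(1) F(2) F(3)] .
    have DN: "min_dist F m n C \<le> n" using field.d_le_n[OF F(1) F(2) F(3)] .
    have e1: "real n * code_rate F m n C - 1 = real (n - min_dist F m n C)" using RE DN by (simp add: of_nat_diff)
    have e2: "real n - real l - real n * code_rate F m n C + 1 = real (min_dist F m n C) - real l" using RE by simp
    show "real n * code_rate F m n C - 1 \<ge> 0" using e1 by simp
    have "cl * (real n * code_rate F m n C - 1) * (real n - real l - real n * code_rate F m n C + 1)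
        = (real (n - min_dist F m n C) * (real (min_dist F m n C) - real l)) / real (l + 1)"
      unfolding e1 e2 cl_def by simp
    also have "\<dots> \<le> (real (l + 1) * real m) / real (l + 1)"
      by (rule divide_right_mono[OF MB]) simp
    also have "\<dots> = real m" by simp
    finally show "real m \<ge> cl * (real n * code_rate F m n C - 1) * (real n - real l - real n * code_rate F m n C + 1)" .
  qed
  have P2: "\<exists>c' > 0. \<forall>(F :: nat ring) m n C. field F \<and> finite (carrier F) \<and> n \<le> m \<and> is_MRD F m n C \<and>
        avg_list_dec F m n C (real l * (1 - code_rate F m n C) / real (l + 1)) l \<and>
        c \<le> code_rate F m n C \<and> code_rate F m n C \<le> 1 - c - real l / real n \<longrightarrow>
        real m \<ge> c' * real n ^ 2" if c: "c > 0" for c :: real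
  proof -
    define c' where "c' = min (c * c * cl / 2) (c / 2)"
    have c'pos: "c' > 0" unfolding c'_def using c clpos by simp
    show ?thesis
    proof (rule exI[of _ c'], intro conjI c'pos allI impI, elim conjE)
      fix F :: "nat ring" and m n C
      assume F: "field F" "finite (carrier F)" "n \<le> m" "is_MRD F m n C"
        "avg_list_dec F m n C (real l * (1 - code_rate F m n C) / real (l + 1)) l"
        and R1: "c \<le> code_rate F m n C" and R2: "code_rate F m n C \<le> 1 - c - real l / real n"
      have n1: "1 \<le> n" using field.mrd_basic[OF F(1) F(2) F(4)] by simp
      define X where "X = real n * code_rate F m n C"
      define N where "N = real n"
      have N1: "N \<ge> 1" unfolding N_def using n1 by simp
      have mN: "real m \<ge> N" unfolding N_def using F(3) by simp
      have main: "real m \<ge> cl * (X - 1) * (N - real l - X + 1)"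
        using P1[OF F(1) F(2) F(4) F(5)] unfolding X_def N_def .
      have A0: "X - 1 \<ge> 0" using P1'[OF F(1) F(2) F(4) F(5)] unfolding X_def .
      have XA: "X \<ge> c * N" unfolding X_def N_def using R1 n1 by (simp add: mult_left_mono mult.commute)
      have XB: "X \<le> N - c * N - real l"
      proof -
        have "X \<le> N * (1 - c - real l / N)" unfolding X_def N_def using R2 n1 by (simp add: mult_left_mono)
        also have "\<dots> = N - c * N - real l" using N1 by (simp add: field_simps)
        finally show ?thesis .
      qed
      have B: "N - real l - X + 1 \<ge> c * N + 1" using XB by simp
      show "real m \<ge> c' * real n ^ 2"
      proof (cases "c * N \<ge> 2")
        case True
        have A: "X - 1 \<ge> c * N / 2" using XA True by simp
        have "c * N / 2 * (c * N) \<le> (X - 1) * (N - real l - X + 1)"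
          by (rule mult_mono) (use A A0 B c N1 in auto)
        then have "cl * (c * N / 2 * (c * N)) \<le> cl * ((X - 1) * (N - real l - X + 1))"
          using clpos by (intro mult_left_mono) auto
        then have "c * c * cl / 2 * N ^ 2 \<le> real m" using main by (simp add: power2_eq_square algebra_simps)
        moreover have "c' * N ^ 2 \<le> c * c * cl / 2 * N ^ 2" unfolding c'_def by (intro mult_right_mono) auto
        ultimately show ?thesis unfolding N_def by linarith
      next
        case False
        have "c' * N ^ 2 \<le> c / 2 * N ^ 2" unfolding c'_def by (intro mult_right_mono) auto
        also have "\<dots> = N * (c * N / 2)" by (simp add: power2_eq_square)
        also have "\<dots> \<le> N * 1" using False N1 by (intro mult_left_mono) auto
        finally show ?thesis using mN unfolding N_def by simp
      qed
    qed
  qed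
  show ?thesis
    by (rule exI[of _ cl]) (use clpos P1 P2 in blast)
qed

end
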